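(* Let $\lambda,N,t,m,v$ be positive integers with $t\ge 2$ and $t\le m(t-1)$. There exists an $OCA_{\lambda}(N;t,m,t,v)$ if and only if there exists an $OCA_{\lambda}(N;t,m,t-1,v)$.
   Context: For positive integers $m,s$, the RT poset $[m\times s]$ is the set $\{1,\ldots,ms\}$ partitioned into $m$ blocks $B_i=\{is+1,\ldots,(i+1)s\}$ ($i=0,\ldots,m-1$); each block is a chain under the usual order of the integers, and elements of different blocks are incomparable. An ideal is a subset $I$ such that $b\in I$ and $a\preceq b$ imply $a\in I$; an anti-ideal is the complement of an ideal. Given an $N\times n$ array over an alphabet $V$ of size $v$, a set of $t$ columns is $\lambda$-covered if in the $N\times t$ subarray formed by those columns every $t$-tuple over $V$ appears as a row at least $\lambda$ times. For positive integers with $2\le t\le ms$, an ordered covering array $OCA_{\lambda}(N;t,m,s,v)$ is an $N\times ms$ array over an alphabet of size $v$ whose columns are labeled by the elements of $[m\times s]$, such that for every anti-ideal $J$ of size $t$ the set of columns labeled by $J$ is $\lambda$-covered. *)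

theory Defs
  imports Main
begin

definition rt_le :: "nat \<Rightarrow> nat \<Rightarrow> nat \<Rightarrow> nat \<Rightarrow> bool" where
  "rt_le m s a b \<longleftrightarrow> a \<in> {1..m*s} \<and> b \<in> {1..m*s} \<and> (a - 1) div s = (b - 1) div s \<and> a \<le> b"

definition rt_ideal :: "nat \<Rightarrow> nat \<Rightarrow> nat set \<Rightarrow> bool" where
  "rt_ideal m s I \<longleftrightarrow> I \<subseteq> {1..m*s} \<and> (\<forall>a b. b \<in> I \<and> rt_le m s a b \<longrightarrow> a \<in> I)"

definition rt_anti_ideal :: "nat \<Rightarrow> nat \<Rightarrow> nat set \<Rightarrow> bool" where
  "rt_anti_ideal m s J \<longleftrightarrow> (\<exists>I. rt_ideal m s I \<and> J = {1..m*s} - I)"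

text \<open>An N x n array over the alphabet {0..<v}: rows indexed by r < N, columns by labels;
  entry A r c.\<close>
definition lam_covered :: "nat \<Rightarrow> nat \<Rightarrow> nat \<Rightarrow> (nat \<Rightarrow> nat \<Rightarrow> nat) \<Rightarrow> nat set \<Rightarrow> bool" where
  "lam_covered lam N v A C \<longleftrightarrow>
     (\<forall>f. (\<forall>c\<in>C. f c < v) \<longrightarrow> lam \<le> card {r. r < N \<and> (\<forall>c\<in>C. A r c = f c)})"

definition is_OCA :: "nat \<Rightarrow> nat \<Rightarrow> nat \<Rightarrow> nat \<Rightarrow> nat \<Rightarrow> nat \<Rightarrow> (nat \<Rightarrow> nat \<Rightarrow> nat) \<Rightarrow> bool" where
  "is_OCA lam N t m s v A \<longleftrightarrow>
     2 \<le> t \<and> t \<le> m * s \<and>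
     (\<forall>r<N. \<forall>c\<in>{1..m*s}. A r c < v) \<and>
     (\<forall>J. rt_anti_ideal m s J \<and> card J = t \<longrightarrow> lam_covered lam N v A J)"

end

theory Submission
  imports Defs
begin

lemma coord_div: "(p::nat) < s \<Longrightarrow> (i*s+p+1 - 1) div s = i"
  by simp
lemma coord_mod: "(p::nat) < s \<Longrightarrow> (i*s+p+1 - 1) mod s = p"
  by simp

lemma coord_eq:
  assumes "(p::nat)<s" "q<s" shows "i*s+p+1 = j*s+q+1 \<longleftrightarrow> i=j \<and> p=q"
  by (metis assms coord_div coord_mod)

lemma coord_obtain:
  assumes "0<s" "(c::nat) \<in> {1..m*s}" shows "\<exists>i p. i<m \<and> p<s \<and> c = i*s+p+1"
proof (intro exI conjI)
  show "(c-1) div s < m" using assms by (simp add: div_less_iff_less_mult, linarith)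
  show "(c-1) mod s < s" using assms by simp
  show "c = (c-1) div s * s + (c-1) mod s + 1" using assms by simp
qed

lemma coord_range: assumes "(i::nat)<m" "p<s" shows "i*s+p+1 \<in> {1..m*s}"
proof -
  have "i*s+p+1 \<le> Suc i * s" using assms by simp
  also have "\<dots> \<le> m*s" using assms by (intro mult_le_mono1) simp
  finally show ?thesis by simp
qed

lemma rt_le_coord:
  assumes "(i::nat)<m" "p<s" "j<m" "q<s"
  shows "rt_le m s (i*s+p+1) (j*s+q+1) \<longleftrightarrow> i=j \<and> p\<le>q"
  using assms coord_range[OF assms(1,2)] coord_range[OF assms(3,4)]
  unfolding rt_le_def by (auto simp del: atLeastAtMost_iff)

lemma anti_iff:
  "rt_anti_ideal m s J \<longleftrightarrow> J \<subseteq> {1..m*s} \<and> (\<forall>a b. a\<in>J \<and> rt_le m s a b \<longrightarrow> b\<in>J)"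
proof
  assume "rt_anti_ideal m s J"
  then obtain I where I: "rt_ideal m s I" "J = {1..m*s} - I" unfolding rt_anti_ideal_def by blast
  show "J \<subseteq> {1..m*s} \<and> (\<forall>a b. a\<in>J \<and> rt_le m s a b \<longrightarrow> b\<in>J)"
    using I unfolding rt_ideal_def rt_le_def by blast
next
  assume H: "J \<subseteq> {1..m*s} \<and> (\<forall>a b. a\<in>J \<and> rt_le m s a b \<longrightarrow> b\<in>J)"
  have "rt_ideal m s ({1..m*s} - J)"
    using H unfolding rt_ideal_def rt_le_def by blast
  moreover have "J = {1..m*s} - ({1..m*s} - J)" using H by blast
  ultimately show "rt_anti_ideal m s J" unfolding rt_anti_ideal_def by blast
qed

lemma cov_transfer:
  assumes "inj_on g J" "lam_covered lam N v B (g`J)"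
  shows "lam_covered lam N v (\<lambda>r c. B r (g c)) J"
  unfolding lam_covered_def
proof (intro allI impI)
  fix f assume f: "\<forall>c\<in>J. f c < v"
  define h where "h = f \<circ> inv_into J g"
  have "\<forall>d\<in>g`J. h d < v" using f assms(1) by (auto simp: h_def)
  then have "lam \<le> card {r. r < N \<and> (\<forall>d\<in>g`J. B r d = h d)}"
    using assms(2) unfolding lam_covered_def by blast
  moreover have "{r. r < N \<and> (\<forall>d\<in>g`J. B r d = h d)} = {r. r < N \<and> (\<forall>c\<in>J. B r (g c) = f c)}"
    using assms(1) by (auto simp: h_def)
  ultimately show "lam \<le> card {r. r < N \<and> (\<forall>c\<in>J. B r (g c) = f c)}" by simp
qed

lemma transfer:
  assumes "is_OCA lam N t m s v B" "2\<le>t" "t \<le> m*s'"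
    and "\<forall>c\<in>{1..m*s'}. g c \<in> {1..m*s}"
    and "\<forall>J. rt_anti_ideal m s' J \<and> card J = t \<longrightarrow> inj_on g J \<and> rt_anti_ideal m s (g`J)"
  shows "is_OCA lam N t m s' v (\<lambda>r c. B r (g c))"
  unfolding is_OCA_def
proof (intro conjI allI impI ballI)
  show "2 \<le> t" "t \<le> m*s'" using assms by auto
  fix r c assume "r < N" "c \<in> {1..m*s'}"
  then show "B r (g c) < v" using assms(1,4) unfolding is_OCA_def by blast
next
  fix J assume J: "rt_anti_ideal m s' J \<and> card J = t"
  then have i: "inj_on g J" and a: "rt_anti_ideal m s (g`J)" using assms(5) by auto
  have "card (g`J) = t" using i J by (simp add: card_image)
  then have "lam_covered lam N v B (g`J)" using assms(1) a unfolding is_OCA_def by blast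
  then show "lam_covered lam N v (\<lambda>r c. B r (g c)) J" using cov_transfer i by blast
qed


definition phi :: "nat \<Rightarrow> nat \<Rightarrow> nat" where
  "phi s c = ((c-1) div s)*(Suc s) + ((c-1) mod s + 1) + 1"

lemma phi_coord: "(p::nat) < s \<Longrightarrow> phi s (i*s+p+1) = i*Suc s + (p+1) + 1"
  unfolding phi_def by simp

lemma dir1:
  assumes A: "is_OCA lam N (Suc s) m (Suc s) v A" and s: "1\<le>s" and t: "Suc s \<le> m*s"
  shows "is_OCA lam N (Suc s) m s v (\<lambda>r c. A r (phi s c))"
proof (rule transfer[OF A _ t])
  show "2 \<le> Suc s" using s by simp
  show "\<forall>c\<in>{1..m*s}. phi s c \<in> {1..m*Suc s}"
  proof
    fix c assume "c \<in> {1..m*s}"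
    then obtain i p where ip: "i<m" "p<s" "c = i*s+p+1" using coord_obtain s by (meson less_le_trans zero_less_one)
    then show "phi s c \<in> {1..m*Suc s}" using phi_coord coord_range[of i m "p+1" "Suc s"] by simp
  qed
  show "\<forall>J. rt_anti_ideal m s J \<and> card J = Suc s \<longrightarrow> inj_on (phi s) J \<and> rt_anti_ideal m (Suc s) (phi s ` J)"
  proof (intro allI impI conjI)
    fix J assume J: "rt_anti_ideal m s J \<and> card J = Suc s"
    then have Jsub: "J \<subseteq> {1..m*s}" and Jup: "\<And>a b. a\<in>J \<Longrightarrow> rt_le m s a b \<Longrightarrow> b\<in>J"
      using anti_iff by blast+
    have co: "\<And>c. c \<in> J \<Longrightarrow> \<exists>i p. i<m \<and> p<s \<and> c = i*s+p+1"
      using coord_obtain s Jsub by (metis less_le_trans subsetD zero_less_one)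
    show "inj_on (phi s) J"
    proof
      fix x y assume xy: "x\<in>J" "y\<in>J" "phi s x = phi s y"
      obtain i p where ip: "i<m" "p<s" "x = i*s+p+1" using co xy by blast
      obtain j q where jq: "j<m" "q<s" "y = j*s+q+1" using co xy by blast
      have "i*Suc s + (p+1) + 1 = j*Suc s + (q+1) + 1" using xy ip jq phi_coord by simp
      then have "i=j \<and> p+1=q+1" using coord_eq[of "p+1" "Suc s" "q+1"] ip jq by simp
      then show "x=y" using ip jq by simp
    qed
    show "rt_anti_ideal m (Suc s) (phi s ` J)"
      unfolding anti_iff
    proof (intro conjI allI impI)
      show "phi s ` J \<subseteq> {1..m*Suc s}"
      proof
        fix a assume "a \<in> phi s ` J"
        then obtain c where c: "c\<in>J" "a = phi s c" by blast
        obtain i p where ip: "i<m" "p<s" "c = i*s+p+1" using co c by blast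
        show "a \<in> {1..m*Suc s}" using c ip phi_coord coord_range[of i m "p+1" "Suc s"] by simp
      qed
      fix a b assume ab: "a \<in> phi s ` J \<and> rt_le m (Suc s) a b"
      then obtain c where c: "c\<in>J" "a = phi s c" by blast
      obtain i p where ip: "i<m" "p<s" "c = i*s+p+1" using co c by blast
      have a: "a = i*Suc s + (p+1) + 1" using c ip phi_coord by simp
      have "b \<in> {1..m*Suc s}" using ab unfolding rt_le_def by blast
      then obtain j q where jq: "j<m" "q<Suc s" "b = j*Suc s+q+1" using coord_obtain by blast
      have "j = i \<and> p+1 \<le> q" using rt_le_coord[of i m "p+1" "Suc s" j q] ab a jq ip by simp
      then have jq2: "j = i" "p+1 \<le> q" by auto
      define d where "d = i*s+(q-1)+1"
      have "rt_le m s c d" unfolding d_def ip(3) using rt_le_coord[of i m p s i "q-1"] ip jq jq2 by simp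
      then have "d \<in> J" using Jup c by blast
      moreover have "phi s d = b" unfolding d_def using phi_coord[of "q-1" s i] jq jq2 by simp
      ultimately show "b \<in> phi s ` J" by blast
    qed
  qed
qed

definition psi :: "nat \<Rightarrow> nat \<Rightarrow> nat \<Rightarrow> nat" where
  "psi m s c = (let i = (c-1) div Suc s; p = (c-1) mod Suc s in
     if p = 0 then ((i+1) mod m)*s + (s-1) + 1 else i*s + (p-1) + 1)"

lemma psi_coord: "(p::nat) < Suc s \<Longrightarrow> psi m s (i*Suc s+p+1) =
   (if p = 0 then ((i+1) mod m)*s + (s-1) + 1 else i*s + (p-1) + 1)"
  unfolding psi_def Let_def by (simp only: coord_div coord_mod)

lemma succ_mod_ne: "(i::nat) < m \<Longrightarrow> 2 \<le> m \<Longrightarrow> (i+1) mod m \<noteq> i"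
proof (cases "i+1 < m")
  case False
  assume "i < m" "2 \<le> m"
  then have "i+1 = m" using False by simp
  then show ?thesis using \<open>2 \<le> m\<close> by auto
qed auto


lemma dir2:
  assumes B: "is_OCA lam N (Suc s) m s v B" and s: "1\<le>s" and m: "2 \<le> m"
  shows "is_OCA lam N (Suc s) m (Suc s) v (\<lambda>r c. B r (psi m s c))"
proof (rule transfer[OF B])
  show "2 \<le> Suc s" using s by simp
  have "1 * Suc s \<le> m * Suc s" using m by (intro mult_le_mono1) simp
  then show "Suc s \<le> m * Suc s" by simp
  have rng: "psi m s (i*Suc s+p+1) \<in> {1..m*s}" if "i<m" "p<Suc s" for i p
  proof (cases "p = 0")
    case True
    have "(i+1) mod m < m" using m by simp
    then show ?thesis using True psi_coord[of 0 s m i] coord_range[of "(i+1) mod m" m "s-1" s] s by simp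
  next
    case False
    then show ?thesis using psi_coord[of p s m i] coord_range[of i m "p-1" s] that by simp
  qed
  show "\<forall>c\<in>{1..m*Suc s}. psi m s c \<in> {1..m*s}"
  proof
    fix c assume "c \<in> {1..m*Suc s}"
    then obtain i p where ip: "i<m" "p<Suc s" "c = i*Suc s+p+1" using coord_obtain by blast
    then show "psi m s c \<in> {1..m*s}" using rng by simp
  qed
  show "\<forall>J. rt_anti_ideal m (Suc s) J \<and> card J = Suc s \<longrightarrow> inj_on (psi m s) J \<and> rt_anti_ideal m s (psi m s ` J)"
  proof (intro allI impI)
    fix J assume J: "rt_anti_ideal m (Suc s) J \<and> card J = Suc s"
    then have Jsub: "J \<subseteq> {1..m*Suc s}" and Jup: "\<And>a b. a\<in>J \<Longrightarrow> rt_le m (Suc s) a b \<Longrightarrow> b\<in>J"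
      using anti_iff by blast+
    have co: "\<And>c. c \<in> J \<Longrightarrow> \<exists>i p. i<m \<and> p<Suc s \<and> c = i*Suc s+p+1"
      using coord_obtain[of "Suc s" _ m] Jsub by blast
    have subI: "psi m s ` J \<subseteq> {1..m*s}"
    proof
      fix a assume "a \<in> psi m s ` J"
      then obtain c where c: "c\<in>J" "a = psi m s c" by blast
      obtain i p where ip: "i<m" "p<Suc s" "c = i*Suc s+p+1" using co c by blast
      show "a \<in> {1..m*s}" using c ip rng by simp
    qed
    show "inj_on (psi m s) J \<and> rt_anti_ideal m s (psi m s ` J)"
    proof (cases "\<exists>i<m. i*Suc s+0+1 \<in> J")
      case True
      then obtain i where i: "i<m" "i*Suc s+0+1 \<in> J" by blast
      define blk where "blk = (\<lambda>p. i*Suc s + p + 1) ` {..<Suc s}"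
      have "blk \<subseteq> J"
      proof
        fix x assume "x \<in> blk"
        then obtain p where p: "p < Suc s" "x = i*Suc s + p + 1" unfolding blk_def by blast
        have "rt_le m (Suc s) (i*Suc s+0+1) x" using p i rt_le_coord[of i m 0 "Suc s" i p] by simp
        then show "x \<in> J" using Jup i by blast
      qed
      moreover have "card blk = Suc s" unfolding blk_def
        by (subst card_image) (auto simp: inj_on_def)
      moreover have "finite J" using Jsub finite_subset by blast
      ultimately have Jb: "J = blk" using J card_subset_eq[of J blk] by simp
      have i': "(i+1) mod m < m" "(i+1) mod m \<noteq> i" using m i succ_mod_ne by auto
      have inj: "inj_on (psi m s) J"
      proof
        fix x y assume xy: "x\<in>J" "y\<in>J" "psi m s x = psi m s y"
        obtain p where p: "p < Suc s" "x = i*Suc s + p + 1" using xy Jb unfolding blk_def by blast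
        obtain q where q: "q < Suc s" "y = i*Suc s + q + 1" using xy Jb unfolding blk_def by blast
        have e: "psi m s (i*Suc s + p + 1) = psi m s (i*Suc s + q + 1)" using xy p q by simp
        show "x = y"
        proof (cases "p = 0")
          case True
          show ?thesis
          proof (cases "q = 0")
            case False
            then have "((i+1) mod m)*s + (s-1) + 1 = i*s + (q-1) + 1"
              using e True psi_coord[of p s m i] psi_coord[of q s m i] p q by simp
            then have "(i+1) mod m = i" using coord_eq[of "s-1" s "q-1"] s q by simp
            then show ?thesis using i' by simp
          qed (use True p q in simp)
        next
          case False
          show ?thesis
          proof (cases "q = 0")
            case True
            then have "((i+1) mod m)*s + (s-1) + 1 = i*s + (p-1) + 1"
              using e False psi_coord[of p s m i] psi_coord[of q s m i] p q by simp
            then have "(i+1) mod m = i" using coord_eq[of "s-1" s "p-1"] s p by simp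
            then show ?thesis using i' by simp
          next
            case q0: False
            then have "i*s + (p-1) + 1 = i*s + (q-1) + 1"
              using e False psi_coord[of p s m i] psi_coord[of q s m i] p q by simp
            then show ?thesis using p q False q0 by simp
          qed
        qed
      qed
      have "rt_anti_ideal m s (psi m s ` J)"
        unfolding anti_iff
      proof (intro conjI allI impI subI)
        fix a b assume ab: "a \<in> psi m s ` J \<and> rt_le m s a b"
        then obtain c where c: "c\<in>J" "a = psi m s c" by blast
        obtain p where p: "p < Suc s" "c = i*Suc s + p + 1" using c Jb unfolding blk_def by blast
        have "b \<in> {1..m*s}" using ab unfolding rt_le_def by blast
        then obtain j q where jq: "j<m" "q<s" "b = j*s+q+1" using coord_obtain s by (metis less_le_trans zero_less_one)
        show "b \<in> psi m s ` J"
        proof (cases "p = 0")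
          case True
          then have a: "a = ((i+1) mod m)*s + (s-1) + 1" using c p psi_coord[of p s m i] by simp
          have "j = (i+1) mod m \<and> s-1 \<le> q" using rt_le_coord[of "(i+1) mod m" m "s-1" s j q] ab a jq i' s by simp
          then have "j = (i+1) mod m" "q = s-1" using jq by auto
          then have "b = a" using a jq by simp
          then show ?thesis using ab by simp
        next
          case False
          then have a: "a = i*s + (p-1) + 1" using c p psi_coord[of p s m i] by simp
          have "j = i \<and> p-1 \<le> q" using rt_le_coord[of i m "p-1" s j q] ab a jq i p False by simp
          then have jq2: "j = i" "p - 1 \<le> q" by auto
          have "i*Suc s + (q+1) + 1 \<in> J" using Jb jq unfolding blk_def by auto
          moreover have "psi m s (i*Suc s + (q+1) + 1) = b" using psi_coord[of "q+1" s m i] jq jq2 by simp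
          ultimately show ?thesis by force
        qed
      qed
      with inj show ?thesis by blast
    next
      case False
      have co2: "\<And>c. c \<in> J \<Longrightarrow> \<exists>i p. i<m \<and> 0<p \<and> p<Suc s \<and> c = i*Suc s+p+1"
      proof -
        fix c assume "c \<in> J"
        then obtain i p where ip: "i<m" "p<Suc s" "c = i*Suc s+p+1" using co by blast
        have "p \<noteq> 0"
        proof
          assume "p = 0"
          then have "i*Suc s+0+1 \<in> J" using ip \<open>c \<in> J\<close> by simp
          then show False using False ip by blast
        qed
        then show "\<exists>i p. i<m \<and> 0<p \<and> p<Suc s \<and> c = i*Suc s+p+1" using ip by blast
      qed
      have inj: "inj_on (psi m s) J"
      proof
        fix x y assume xy: "x\<in>J" "y\<in>J" "psi m s x = psi m s y"
        obtain i p where p: "i<m" "0<p" "p < Suc s" "x = i*Suc s + p + 1" using xy co2 by blast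
        obtain j q where q: "j<m" "0<q" "q < Suc s" "y = j*Suc s + q + 1" using xy co2 by blast
        have "i*s + (p-1) + 1 = j*s + (q-1) + 1"
          using xy p q psi_coord[of p s m i] psi_coord[of q s m j] by simp
        then have "i = j \<and> p - 1 = q - 1" using coord_eq[of "p-1" s "q-1"] p q by simp
        then have ij: "i = j" and pq: "p - 1 = q - 1" by auto
        from pq have "p = q" using p(2) q(2) by linarith
        then show "x = y" using p q ij by simp
      qed
      have "rt_anti_ideal m s (psi m s ` J)"
        unfolding anti_iff
      proof (intro conjI allI impI subI)
        fix a b assume ab: "a \<in> psi m s ` J \<and> rt_le m s a b"
        then obtain c where c: "c\<in>J" "a = psi m s c" by blast
        obtain i p where p: "i<m" "0<p" "p < Suc s" "c = i*Suc s + p + 1" using c co2 by blast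
        have a: "a = i*s + (p-1) + 1" using c p psi_coord[of p s m i] by simp
        have "b \<in> {1..m*s}" using ab unfolding rt_le_def by blast
        then obtain j q where jq: "j<m" "q<s" "b = j*s+q+1" using coord_obtain s by (metis less_le_trans zero_less_one)
        have "j = i \<and> p-1 \<le> q" using rt_le_coord[of i m "p-1" s j q] ab a jq p by simp
        then have jq2: "j = i" "p - 1 \<le> q" by auto
        define d where "d = i*Suc s + (q+1) + 1"
        have "rt_le m (Suc s) c d" unfolding d_def p(4) using rt_le_coord[of i m p "Suc s" i "q+1"] p jq jq2 by simp
        then have "d \<in> J" using Jup c by blast
        moreover have "psi m s d = b" unfolding d_def using psi_coord[of "q+1" s m i] jq jq2 by simp
        ultimately show "b \<in> psi m s ` J" by force
      qed
      with inj show ?thesis by blast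
    qed
  qed
qed

theorem corollary1:
  fixes lam N t m v :: nat
  assumes "0 < lam" "0 < N" "0 < t" "0 < m" "0 < v"
    and "2 \<le> t" and "t \<le> m * (t - 1)"
  shows "(\<exists>A. is_OCA lam N t m t v A) \<longleftrightarrow> (\<exists>A. is_OCA lam N t m (t - 1) v A)"
proof -
  obtain s where ts: "t = Suc s" and s: "1 \<le> s" using assms(6) by (intro that[of "t-1"]) auto
  have m: "2 \<le> m"
  proof (rule ccontr)
    assume "\<not> 2 \<le> m"
    then have "m = 1" using assms(4) by simp
    then show False using assms(7) ts by simp
  qed
  have t: "Suc s \<le> m * s" using assms(7) ts by simp
  show ?thesis unfolding ts diff_Suc_1
  proof
    assume "\<exists>A. is_OCA lam N (Suc s) m (Suc s) v A"
    then obtain A where "is_OCA lam N (Suc s) m (Suc s) v A" by blast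
    then show "\<exists>A. is_OCA lam N (Suc s) m s v A" using dir1[OF _ s t] by blast
  next
    assume "\<exists>A. is_OCA lam N (Suc s) m s v A"
    then obtain A where "is_OCA lam N (Suc s) m s v A" by blast
    then show "\<exists>A. is_OCA lam N (Suc s) m (Suc s) v A" using dir2[OF _ s m] by blast
  qed
qed

end
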